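(* In the asynchronous online testing setting described in the context, suppose that the null $p$-values are independent of each other and of the non-null $p$-values, and that the test levels $\alpha_t$ (and candidacy thresholds $\lambda_t$) are monotone. Then $\mathrm{LORD}_{\mathrm{async}}$ and $\mathrm{SAFFRON}_{\mathrm{async}}$ with target level $\alpha$ both guarantee $\mathrm{FDR}(t)\le\alpha$ for all $t\in\mathbb{N}$.
   Context: Hypotheses $H_1,H_2,\dots$ are tested; the test of $H_t$ starts at step $t$ with test level $\alpha_t\ge0$ (and, for SAFFRON-type procedures, a candidacy threshold $\lambda_t$ with $\alpha_t\le\lambda_t<1$) and produces a $p$-value $P_t$; if $H_t$ is a true null, $P_t$ is super-uniform: $\mathbb{P}(P_t\le u)\le u$ for all $u\in[0,1]$. $\mathcal{H}^0$ is the fixed set of true null indices. Test $t$ has a fixed decision time $E_t\ge t$. For each step $s$, let $\mathcal{R}_s=\{i\in[s]: E_i=s,\ P_i\le\alpha_i\}$ and $\mathcal{C}_s=\{i\in[s]:E_i=s,\ P_i\le\lambda_i\}$. In $\mathrm{LORD}_{\mathrm{async}}$, $\alpha_t=f_t(\mathcal{R}_1,\dots,\mathcal{R}_{t-1})$ for deterministic functions $f_t$, chosen so that for all $t$, $\sum_{j\le t}\alpha_j\le\alpha\big((\sum_{j\le t}\mathbf{1}\{P_j\le\alpha_j,\ E_j<t\})\vee1\big)$. In $\mathrm{SAFFRON}_{\mathrm{async}}$, $\alpha_t=g_t(\mathcal{R}_1,\mathcal{C}_1,\dots,\mathcal{R}_{t-1},\mathcal{C}_{t-1})$ and $\lambda_t=h_t(\mathcal{R}_1,\mathcal{C}_1,\dots,\mathcal{R}_{t-1},\mathcal{C}_{t-1})$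 for deterministic $g_t,h_t$, chosen so that for all $t$, $\sum_{j\le t}\frac{\alpha_j}{1-\lambda_j}\big(\mathbf{1}\{P_j>\lambda_j,\ E_j<t\}+\mathbf{1}\{E_j\ge t\}\big)\le\alpha\big((\sum_{j\le t}\mathbf{1}\{P_j\le\alpha_j,\ E_j<t\})\vee1\big)$. Monotone means: each of $f_t$ (resp. $g_t,h_t$) does not decrease when any argument $\mathcal{R}_i$ (or $\mathcal{C}_i$) is replaced by a superset, the other arguments fixed. $\mathcal{R}(t)=\{i\in[t]:E_i\le t,\ P_i\le\alpha_i\}$, $\mathcal{V}(t)=\mathcal{R}(t)\cap\mathcal{H}^0$, and $\mathrm{FDR}(t)=\mathbb{E}\big[|\mathcal{V}(t)|/(|\mathcal{R}(t)|\vee1)\big]$. *)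

theory Defs
  imports "HOL-Probability.Probability"
begin

text \<open>Indices of hypotheses start at 1. A realization of the p-values is p :: nat => real.\<close>

definition dec_set :: "(nat \<Rightarrow> nat) \<Rightarrow> (nat \<Rightarrow> real) \<Rightarrow> (nat \<Rightarrow> real) \<Rightarrow> nat \<Rightarrow> nat set" where
  "dec_set E p a s = {i \<in> {1..s}. E i = s \<and> p i \<le> a i}"

definition adm_hist :: "nat \<Rightarrow> (nat \<Rightarrow> nat set) \<Rightarrow> bool" where
  "adm_hist t R \<longleftrightarrow> (\<forall>s. R s \<subseteq> (if 1 \<le> s \<and> s < t then {1..s} else {}))"

text \<open>LORD_async test levels: lord_lv f E p n i = alpha_i for i <= n.\<close>
primrec lord_lv :: "(nat \<Rightarrow> (nat \<Rightarrow> nat set) \<Rightarrow> real) \<Rightarrow> (nat \<Rightarrow> nat) \<Rightarrow> (nat \<Rightarrow> real)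
    \<Rightarrow> nat \<Rightarrow> nat \<Rightarrow> real" where
  "lord_lv f E p 0 = (\<lambda>i. 0)"
| "lord_lv f E p (Suc n) =
     (lord_lv f E p n)(Suc n := f (Suc n)
        (\<lambda>s. if s \<le> n then dec_set E p (lord_lv f E p n) s else {}))"

definition lord_alpha :: "(nat \<Rightarrow> (nat \<Rightarrow> nat set) \<Rightarrow> real) \<Rightarrow> (nat \<Rightarrow> nat) \<Rightarrow> (nat \<Rightarrow> real)
    \<Rightarrow> nat \<Rightarrow> real" where
  "lord_alpha f E p t = lord_lv f E p t t"

primrec saff_lv :: "(nat \<Rightarrow> (nat \<Rightarrow> nat set) \<Rightarrow> (nat \<Rightarrow> nat set) \<Rightarrow> real)
    \<Rightarrow> (nat \<Rightarrow> (nat \<Rightarrow> nat set) \<Rightarrow> (nat \<Rightarrow> nat set) \<Rightarrow> real)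
    \<Rightarrow> (nat \<Rightarrow> nat) \<Rightarrow> (nat \<Rightarrow> real) \<Rightarrow> nat \<Rightarrow> (nat \<Rightarrow> real) \<times> (nat \<Rightarrow> real)" where
  "saff_lv g h E p 0 = (\<lambda>i. 0, \<lambda>i. 0)"
| "saff_lv g h E p (Suc n) =
     (let a = fst (saff_lv g h E p n); l = snd (saff_lv g h E p n);
          Rs = (\<lambda>s. if s \<le> n then dec_set E p a s else {});
          Cs = (\<lambda>s. if s \<le> n then dec_set E p l s else {})
      in (a(Suc n := g (Suc n) Rs Cs), l(Suc n := h (Suc n) Rs Cs)))"

definition saff_alpha where
  "saff_alpha g h E p t = fst (saff_lv g h E p t) t"

definition saff_lambda where
  "saff_lambda g h E p t = snd (saff_lv g h E p t) t"

definition mono_rule1 :: "(nat \<Rightarrow> (nat \<Rightarrow> nat set) \<Rightarrow> real) \<Rightarrow> bool" where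
  "mono_rule1 f \<longleftrightarrow> (\<forall>t\<ge>1. \<forall>R R'. adm_hist t R \<and> adm_hist t R' \<and> (\<forall>s. R s \<subseteq> R' s)
      \<longrightarrow> f t R \<le> f t R')"

definition mono_rule2 :: "(nat \<Rightarrow> (nat \<Rightarrow> nat set) \<Rightarrow> (nat \<Rightarrow> nat set) \<Rightarrow> real) \<Rightarrow> bool" where
  "mono_rule2 g \<longleftrightarrow> (\<forall>t\<ge>1. \<forall>R C R' C'. adm_hist t R \<and> adm_hist t C \<and> adm_hist t R' \<and> adm_hist t C'
      \<and> (\<forall>s. R s \<subseteq> R' s) \<and> (\<forall>s. C s \<subseteq> C' s) \<longrightarrow> g t R C \<le> g t R' C')"

definition rej_before :: "(nat \<Rightarrow> nat) \<Rightarrow> (nat \<Rightarrow> real) \<Rightarrow> (nat \<Rightarrow> real) \<Rightarrow> nat \<Rightarrow> nat" where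
  "rej_before E p a t = card {j \<in> {1..t}. p j \<le> a j \<and> E j < t}"

definition rej_set :: "(nat \<Rightarrow> nat) \<Rightarrow> (nat \<Rightarrow> real) \<Rightarrow> (nat \<Rightarrow> real) \<Rightarrow> nat \<Rightarrow> nat set" where
  "rej_set E p a t = {i \<in> {1..t}. E i \<le> t \<and> p i \<le> a i}"

definition FDP :: "nat set \<Rightarrow> (nat \<Rightarrow> nat) \<Rightarrow> (nat \<Rightarrow> real) \<Rightarrow> (nat \<Rightarrow> real) \<Rightarrow> nat \<Rightarrow> real" where
  "FDP H0 E p a t = real (card (rej_set E p a t \<inter> H0)) / real (max (card (rej_set E p a t)) 1)"

definition FDR :: "'w measure \<Rightarrow> nat set \<Rightarrow> (nat \<Rightarrow> nat) \<Rightarrow> (nat \<Rightarrow> 'w \<Rightarrow> real)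
    \<Rightarrow> ((nat \<Rightarrow> real) \<Rightarrow> nat \<Rightarrow> real) \<Rightarrow> nat \<Rightarrow> real" where
  "FDR M H0 E P A t = prob_space.expectation M (\<lambda>\<omega>. FDP H0 E (\<lambda>i. P i \<omega>) (A (\<lambda>i. P i \<omega>)) t)"

text \<open>Null p-values are mutually independent and independent of the family of non-null p-values.\<close>
definition null_indep :: "'w measure \<Rightarrow> nat set \<Rightarrow> (nat \<Rightarrow> 'w \<Rightarrow> real) \<Rightarrow> bool" where
  "null_indep M H0 P \<longleftrightarrow>
     (let S = (\<lambda>k. case k of Some i \<Rightarrow> {i} | None \<Rightarrow> - H0) in
      prob_space.indep_vars M (\<lambda>k. Pi\<^sub>M (S k) (\<lambda>_. borel))
        (\<lambda>k \<omega>. restrict (\<lambda>j. P j \<omega>) (S k)) (Some ` H0 \<union> {None}))"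

end

theory Submission
  imports Defs
begin


lemma indep_fubini:
  fixes X Y :: "'w \<Rightarrow> 'b"
  assumes M: "prob_space M" and ind: "prob_space.indep_var M N1 X N Y"
    and H[measurable]: "H \<in> borel_measurable (N1 \<Otimes>\<^sub>M N)"
  shows "(\<integral>\<^sup>+\<omega>. H (X \<omega>, Y \<omega>) \<partial>M) = (\<integral>\<^sup>+ y. \<integral>\<^sup>+ x. H (x,y) \<partial>(distr M N1 X) \<partial>(distr M N Y))"
proof -
  interpret prob_space M by fact
  have rv: "X \<in> measurable M N1" "Y \<in> measurable M N"
    and eq: "distr M N1 X \<Otimes>\<^sub>M distr M N Y = distr M (N1 \<Otimes>\<^sub>M N) (\<lambda>x. (X x, Y x))"
    using ind unfolding indep_var_distribution_eq by auto
  interpret DX: prob_space "distr M N1 X" using rv by (simp add: prob_space_distr)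
  interpret DY: prob_space "distr M N Y" using rv by (simp add: prob_space_distr)
  interpret pair_sigma_finite "distr M N1 X" "distr M N Y" by unfold_locales
  have "(\<integral>\<^sup>+ y. \<integral>\<^sup>+ x. H (x,y) \<partial>(distr M N1 X) \<partial>(distr M N Y))
     = integral\<^sup>N (distr M N1 X \<Otimes>\<^sub>M distr M N Y) H"
    by (rule nn_integral_snd) simp
  also have "\<dots> = integral\<^sup>N (distr M (N1 \<Otimes>\<^sub>M N) (\<lambda>x. (X x, Y x))) H" by (simp add: eq)
  also have "\<dots> = (\<integral>\<^sup>+\<omega>. H (X \<omega>, Y \<omega>) \<partial>M)"
    using rv by (subst nn_integral_distr) auto
  finally show ?thesis by simp
qed

lemma inner_bound1:
  assumes M: "prob_space M" and X[measurable]: "X \<in> measurable M N1"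
    and Xi[measurable]: "(\<lambda>x. x i) \<in> borel_measurable N1"
    and su: "\<And>u. 0 \<le> u \<Longrightarrow> u \<le> 1 \<Longrightarrow> measure M {\<omega>\<in>space M. X \<omega> i \<le> u} \<le> u"
    and a: "0 \<le> a" and phi: "0 \<le> \<phi>"
  shows "(\<integral>\<^sup>+ x. ennreal (if x i \<le> a then \<phi> else 0) \<partial>(distr M N1 X)) \<le> (\<integral>\<^sup>+ x. ennreal (a * \<phi>) \<partial>(distr M N1 X))"
proof -
  interpret prob_space M by fact
  interpret DX: prob_space "distr M N1 X" by (simp add: prob_space_distr)
  have sp1: "emeasure (distr M N1 X) (space N1) = 1" using DX.emeasure_space_1 by simp
  have "(\<integral>\<^sup>+ x. ennreal (if x i \<le> a then \<phi> else 0) \<partial>(distr M N1 X))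
      = (\<integral>\<^sup>+ x. ennreal \<phi> * indicator {x\<in>space N1. x i \<le> a} x \<partial>(distr M N1 X))"
    by (intro nn_integral_cong) (auto simp: indicator_def)
  also have "\<dots> = ennreal \<phi> * emeasure (distr M N1 X) {x\<in>space N1. x i \<le> a}"
    by (subst nn_integral_cmult_indicator) auto
  also have "emeasure (distr M N1 X) {x\<in>space N1. x i \<le> a} = emeasure M {\<omega>\<in>space M. X \<omega> i \<le> a}"
    by (subst emeasure_distr) (auto intro!: arg_cong[where f="emeasure M"] measurable_space[OF X])
  also have "\<dots> = ennreal (measure M {\<omega>\<in>space M. X \<omega> i \<le> a})" by (simp add: emeasure_eq_measure)
  also have "measure M {\<omega>\<in>space M. X \<omega> i \<le> a} \<le> a"
  proof (cases "a \<le> 1")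
    case True then show ?thesis using su a by auto
  next
    case False then show ?thesis using prob_le_1 by (meson linear order_trans)
  qed
  then have "ennreal \<phi> * ennreal (measure M {\<omega>\<in>space M. X \<omega> i \<le> a}) \<le> ennreal \<phi> * ennreal a"
    by (intro mult_left_mono ennreal_leI) auto
  also have "\<dots> = (\<integral>\<^sup>+ x. ennreal (a * \<phi>) \<partial>(distr M N1 X))"
    using a phi by (simp add: ennreal_mult' mult.commute sp1)
  finally show ?thesis .
qed

lemma inner_bound2:
  assumes M: "prob_space M" and X[measurable]: "X \<in> measurable M N1"
    and Xi[measurable]: "(\<lambda>x. x i) \<in> borel_measurable N1"
    and su: "\<And>u. 0 \<le> u \<Longrightarrow> u \<le> 1 \<Longrightarrow> measure M {\<omega>\<in>space M. X \<omega> i \<le> u} \<le> u"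
    and l: "0 \<le> l" "l < 1" and c: "0 \<le> c"
  shows "(\<integral>\<^sup>+ x. ennreal (c * (1 - l)) \<partial>(distr M N1 X)) \<le> (\<integral>\<^sup>+ x. ennreal (if x i > l then c else 0) \<partial>(distr M N1 X))"
proof -
  interpret prob_space M by fact
  interpret DX: prob_space "distr M N1 X" by (simp add: prob_space_distr)
  have sp1: "emeasure (distr M N1 X) (space N1) = 1" using DX.emeasure_space_1 by simp
  have "(\<integral>\<^sup>+ x. ennreal (if x i > l then c else 0) \<partial>(distr M N1 X))
      = (\<integral>\<^sup>+ x. ennreal c * indicator {x\<in>space N1. x i > l} x \<partial>(distr M N1 X))"
    by (intro nn_integral_cong) (auto simp: indicator_def)
  also have "\<dots> = ennreal c * emeasure (distr M N1 X) {x\<in>space N1. x i > l}"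
    by (subst nn_integral_cmult_indicator) auto
  also have "emeasure (distr M N1 X) {x\<in>space N1. x i > l} = emeasure M {\<omega>\<in>space M. X \<omega> i > l}"
    by (subst emeasure_distr) (auto intro!: arg_cong[where f="emeasure M"] measurable_space[OF X])
  also have "\<dots> = ennreal (measure M {\<omega>\<in>space M. X \<omega> i > l})" by (simp add: emeasure_eq_measure)
  also have "measure M {\<omega>\<in>space M. X \<omega> i > l} = 1 - measure M {\<omega>\<in>space M. X \<omega> i \<le> l}"
  proof -
    have "{\<omega>\<in>space M. X \<omega> i > l} = space M - {\<omega>\<in>space M. X \<omega> i \<le> l}" by auto
    then show ?thesis by (simp add: prob_compl)
  qed
  finally have eq: "(\<integral>\<^sup>+ x. ennreal (if x i > l then c else 0) \<partial>(distr M N1 X)) = ennreal c * ennreal (1 - measure M {\<omega>\<in>space M. X \<omega> i \<le> l})" .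
  have "1 - l \<le> 1 - measure M {\<omega>\<in>space M. X \<omega> i \<le> l}" using su[of l] l by auto
  then have "ennreal c * ennreal (1 - l) \<le> ennreal c * ennreal (1 - measure M {\<omega>\<in>space M. X \<omega> i \<le> l})"
    by (intro mult_left_mono ennreal_leI) auto
  moreover have "(\<integral>\<^sup>+ x. ennreal (c * (1 - l)) \<partial>(distr M N1 X)) = ennreal c * ennreal (1 - l)"
    using l c by (simp add: ennreal_mult' sp1)
  ultimately show ?thesis using eq by simp
qed

lemma outer_bound1:
  assumes M: "prob_space M" and ind: "prob_space.indep_var M N1 X N Y"
    and Xi[measurable]: "(\<lambda>x. x i) \<in> borel_measurable N1"
    and su: "\<And>u. 0 \<le> u \<Longrightarrow> u \<le> 1 \<Longrightarrow> measure M {\<omega>\<in>space M. X \<omega> i \<le> u} \<le> u"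
    and a[measurable]: "a \<in> borel_measurable N" and phi[measurable]: "\<phi> \<in> borel_measurable N"
    and nn: "\<And>y. y \<in> space N \<Longrightarrow> 0 \<le> a y" "\<And>y. y \<in> space N \<Longrightarrow> 0 \<le> \<phi> y"
  shows "(\<integral>\<^sup>+\<omega>. ennreal (if X \<omega> i \<le> a (Y \<omega>) then \<phi> (Y \<omega>) else 0) \<partial>M)
      \<le> (\<integral>\<^sup>+\<omega>. ennreal (a (Y \<omega>) * \<phi> (Y \<omega>)) \<partial>M)"
proof -
  interpret prob_space M by fact
  have X[measurable]: "X \<in> measurable M N1" using ind by (rule indep_var_rv1)
  have "(\<integral>\<^sup>+\<omega>. ennreal (if X \<omega> i \<le> a (Y \<omega>) then \<phi> (Y \<omega>) else 0) \<partial>M)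
     = (\<integral>\<^sup>+\<omega>. (\<lambda>(x,y). ennreal (if x i \<le> a y then \<phi> y else 0)) (X \<omega>, Y \<omega>) \<partial>M)" by simp
  also have "\<dots> = (\<integral>\<^sup>+ y. \<integral>\<^sup>+ x. ennreal (if x i \<le> a y then \<phi> y else 0) \<partial>(distr M N1 X) \<partial>(distr M N Y))"
    by (subst indep_fubini[OF M ind]) auto
  also have "\<dots> \<le> (\<integral>\<^sup>+ y. \<integral>\<^sup>+ x. ennreal (a y * \<phi> y) \<partial>(distr M N1 X) \<partial>(distr M N Y))"
    by (intro nn_integral_mono inner_bound1[OF M X Xi su]) (auto intro: nn)
  also have "\<dots> = (\<integral>\<^sup>+\<omega>. (\<lambda>(x,y). ennreal (a y * \<phi> y)) (X \<omega>, Y \<omega>) \<partial>M)"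
    by (subst indep_fubini[OF M ind]) auto
  finally show ?thesis by simp
qed

lemma outer_bound2:
  assumes M: "prob_space M" and ind: "prob_space.indep_var M N1 X N Y"
    and Xi[measurable]: "(\<lambda>x. x i) \<in> borel_measurable N1"
    and su: "\<And>u. 0 \<le> u \<Longrightarrow> u \<le> 1 \<Longrightarrow> measure M {\<omega>\<in>space M. X \<omega> i \<le> u} \<le> u"
    and l[measurable]: "l \<in> borel_measurable N" and c[measurable]: "c \<in> borel_measurable N"
    and nn: "\<And>y. y \<in> space N \<Longrightarrow> 0 \<le> l y" "\<And>y. y \<in> space N \<Longrightarrow> l y < 1"
       "\<And>y. y \<in> space N \<Longrightarrow> 0 \<le> c y"
  shows "(\<integral>\<^sup>+\<omega>. ennreal (c (Y \<omega>) * (1 - l (Y \<omega>))) \<partial>M)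
      \<le> (\<integral>\<^sup>+\<omega>. ennreal (if X \<omega> i > l (Y \<omega>) then c (Y \<omega>) else 0) \<partial>M)"
proof -
  interpret prob_space M by fact
  have X[measurable]: "X \<in> measurable M N1" using ind by (rule indep_var_rv1)
  have "(\<integral>\<^sup>+\<omega>. ennreal (c (Y \<omega>) * (1 - l (Y \<omega>))) \<partial>M)
     = (\<integral>\<^sup>+\<omega>. (\<lambda>(x,y). ennreal (c y * (1 - l y))) (X \<omega>, Y \<omega>) \<partial>M)" by simp
  also have "\<dots> = (\<integral>\<^sup>+ y. \<integral>\<^sup>+ x. ennreal (c y * (1 - l y)) \<partial>(distr M N1 X) \<partial>(distr M N Y))"
    by (subst indep_fubini[OF M ind]) auto
  also have "\<dots> \<le> (\<integral>\<^sup>+ y. \<integral>\<^sup>+ x. ennreal (if x i > l y then c y else 0) \<partial>(distr M N1 X) \<partial>(distr M N Y))"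
    by (intro nn_integral_mono inner_bound2[OF M X Xi su]) (auto intro: nn)
  also have "\<dots> = (\<integral>\<^sup>+\<omega>. (\<lambda>(x,y). ennreal (if x i > l y then c y else 0)) (X \<omega>, Y \<omega>) \<partial>M)"
    by (subst indep_fubini[OF M ind]) auto
  finally show ?thesis by simp
qed



definition hist :: "(nat \<Rightarrow> nat) \<Rightarrow> (nat \<Rightarrow> real) \<Rightarrow> (nat \<Rightarrow> real) \<Rightarrow> nat \<Rightarrow> nat \<Rightarrow> nat set" where
  "hist E p a t = (\<lambda>s. if s < t then dec_set E p a s else {})"

lemma D1:
  "fst (saff_lv g h E p n) j = (if j \<le> n then saff_alpha g h E p j else 0) \<and>
   snd (saff_lv g h E p n) j = (if j \<le> n then saff_lambda g h E p j else 0)"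
proof (induction n arbitrary: j)
  case 0
  then show ?case by (simp add: saff_alpha_def saff_lambda_def)
next
  case (Suc n)
  show ?case
  proof (cases "j = Suc n")
    case True
    then show ?thesis by (simp add: saff_alpha_def saff_lambda_def)
  next
    case False
    then show ?thesis using Suc.IH[of j] by (simp add: Let_def)
  qed
qed

lemma dec_set_lv:
  assumes "s \<le> n"
  shows "dec_set E p (fst (saff_lv g h E p n)) s = dec_set E p (saff_alpha g h E p) s"
    "dec_set E p (snd (saff_lv g h E p n)) s = dec_set E p (saff_lambda g h E p) s"
  using assms by (auto simp: dec_set_def D1)

lemma D2:
  assumes "1 \<le> t"
  shows "saff_alpha g h E p t = g t (hist E p (saff_alpha g h E p) t) (hist E p (saff_lambda g h E p) t)"
    "saff_lambda g h E p t = h t (hist E p (saff_alpha g h E p) t) (hist E p (saff_lambda g h E p) t)"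
proof -
  obtain n where t: "t = Suc n" using assms by (cases t) auto
  have 1: "(\<lambda>s. if s \<le> n then dec_set E p (fst (saff_lv g h E p n)) s else {}) = hist E p (saff_alpha g h E p) t"
    "(\<lambda>s. if s \<le> n then dec_set E p (snd (saff_lv g h E p n)) s else {}) = hist E p (saff_lambda g h E p) t"
    unfolding hist_def t by (rule ext, case_tac "s \<le> n", simp_all add: dec_set_lv less_Suc_eq_le)+
  show "saff_alpha g h E p t = g t (hist E p (saff_alpha g h E p) t) (hist E p (saff_lambda g h E p) t)"
    using 1 by (simp add: saff_alpha_def t Let_def)
  show "saff_lambda g h E p t = h t (hist E p (saff_alpha g h E p) t) (hist E p (saff_lambda g h E p) t)"
    using 1 by (simp add: saff_lambda_def t Let_def)
qed

lemma D0: "saff_alpha g h E p 0 = 0" "saff_lambda g h E p 0 = 0"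
  by (simp_all add: saff_alpha_def saff_lambda_def)

lemma adm_hist: "adm_hist t (hist E p a t)"
  by (auto simp: adm_hist_def hist_def dec_set_def)

lemma lord_saff: "saff_lv (\<lambda>t R C. f t R) (\<lambda>t R C. f t R) E p n = (lord_lv f E p n, lord_lv f E p n)"
  by (induction n) (simp_all add: Let_def fun_upd_def)

lemma lord_alpha_saff: "lord_alpha f E = saff_alpha (\<lambda>t R C. f t R) (\<lambda>t R C. f t R) E"
  "lord_alpha f E = saff_lambda (\<lambda>t R C. f t R) (\<lambda>t R C. f t R) E"
  by (auto simp: fun_eq_iff lord_alpha_def saff_alpha_def saff_lambda_def lord_saff)

lemma D3:
  assumes "\<And>i. E i < t \<Longrightarrow> p i = p' i"
  shows "saff_alpha g h E p t = saff_alpha g h E p' t \<and> saff_lambda g h E p t = saff_lambda g h E p' t"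
  using assms
proof (induction t rule: less_induct)
  case (less t)
  show ?case
  proof (cases "t = 0")
    case True then show ?thesis by (simp add: D0)
  next
    case False
    have "dec_set E p (saff_alpha g h E p) s = dec_set E p' (saff_alpha g h E p') s \<and>
          dec_set E p (saff_lambda g h E p) s = dec_set E p' (saff_lambda g h E p') s" if "s < t" for s
    proof -
      have "p i = p' i \<and> saff_alpha g h E p i = saff_alpha g h E p' i \<and> saff_lambda g h E p i = saff_lambda g h E p' i"
        if "i \<in> {1..s}" "E i = s" for i
      proof -
        have "i < t" using that \<open>s < t\<close> by simp
        moreover have "\<And>j. E j < i \<Longrightarrow> p j = p' j" using less.prems \<open>i < t\<close> by simp
        moreover have "p i = p' i" using less.prems that \<open>s < t\<close> by simp
        ultimately show ?thesis using less.IH[of i] by blast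
      qed
      note * = this
      show ?thesis unfolding dec_set_def by (intro conjI Collect_cong) (use * in fastforce)+
    qed
    note ** = this
    have "hist E p (saff_alpha g h E p) t = hist E p' (saff_alpha g h E p') t"
      "hist E p (saff_lambda g h E p) t = hist E p' (saff_lambda g h E p') t"
      unfolding hist_def by (auto simp: fun_eq_iff **[THEN conjunct1] **[THEN conjunct2])
    then show ?thesis using False D2[of t g h E p] D2[of t g h E p'] by simp
  qed
qed


lemma D4:
  assumes mg: "mono_rule2 g" and mh: "mono_rule2 h"
    and hyp: "\<And>j. p' j \<le> p j \<or> (p' j \<le> saff_alpha g h E p' j \<and> p' j \<le> saff_lambda g h E p' j)"
  shows "saff_alpha g h E p t \<le> saff_alpha g h E p' t \<and> saff_lambda g h E p t \<le> saff_lambda g h E p' t"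
proof (induction t rule: less_induct)
  case (less t)
  show ?case
  proof (cases "t = 0")
    case True then show ?thesis by (simp add: D0)
  next
    case False
    have sub: "dec_set E p (saff_alpha g h E p) s \<subseteq> dec_set E p' (saff_alpha g h E p') s \<and>
          dec_set E p (saff_lambda g h E p) s \<subseteq> dec_set E p' (saff_lambda g h E p') s" if "s < t" for s
    proof -
      have "(p i \<le> saff_alpha g h E p i \<longrightarrow> p' i \<le> saff_alpha g h E p' i) \<and>
            (p i \<le> saff_lambda g h E p i \<longrightarrow> p' i \<le> saff_lambda g h E p' i)"
        if "i \<in> {1..s}" for i
      proof -
        have "i < t" using that \<open>s < t\<close> by simp
        then have "saff_alpha g h E p i \<le> saff_alpha g h E p' i" "saff_lambda g h E p i \<le> saff_lambda g h E p' i"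
          using less.IH[of i] by auto
        then show ?thesis using hyp[of i] by linarith
      qed
      then show ?thesis unfolding dec_set_def by blast
    qed
    have "hist E p (saff_alpha g h E p) t s \<subseteq> hist E p' (saff_alpha g h E p') t s \<and>
          hist E p (saff_lambda g h E p) t s \<subseteq> hist E p' (saff_lambda g h E p') t s" for s
      unfolding hist_def using sub[of s] by auto
    moreover have "1 \<le> t" using False by simp
    ultimately show ?thesis
      using mg mh unfolding mono_rule2_def
      using D2[of t g h E p] D2[of t g h E p'] adm_hist by metis
  qed
qed

lemma rej_mono:
  assumes "\<And>j. saff_alpha g h E p j \<le> saff_alpha g h E p' j"
    and hyp: "\<And>j. p' j \<le> p j \<or> p' j \<le> saff_alpha g h E p' j"
  shows "rej_set E p (saff_alpha g h E p) t \<subseteq> rej_set E p' (saff_alpha g h E p') t"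
  unfolding rej_set_def using assms by (smt (verit, ccfv_SIG) Collect_mono)


lemma measurable_finite_range:
  assumes fin: "finite (f ` space N)" and pre: "\<And>y. y \<in> f ` space N \<Longrightarrow> {x\<in>space N. f x = y} \<in> sets N"
  shows "f \<in> measurable N (count_space UNIV)"
proof (rule measurableI)
  fix A
  have "f -` A \<inter> space N = (\<Union>y\<in>A \<inter> f ` space N. {x\<in>space N. f x = y})" by auto
  also have "\<dots> \<in> sets N" using fin pre by (intro sets.finite_UN) auto
  finally show "f -` A \<inter> space N \<in> sets N" .
qed auto

lemma finite_hists: "finite {R :: nat \<Rightarrow> nat set. \<forall>s. R s \<subseteq> (if s < t then {1..s} else {})}"
proof (rule finite_imageD[where f="\<lambda>R. Sigma UNIV R"])
  show "finite ((\<lambda>R. Sigma UNIV R) ` {R :: nat \<Rightarrow> nat set. \<forall>s. R s \<subseteq> (if s < t then {1..s} else {})})"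
  proof (rule finite_subset)
    show "(\<lambda>R. Sigma UNIV R) ` {R :: nat \<Rightarrow> nat set. \<forall>s. R s \<subseteq> (if s < t then {1..s} else {})} \<subseteq> Pow ({..<t} \<times> {1..t})"
    proof (rule image_subsetI, rule PowI, rule subsetI)
      fix R :: "nat \<Rightarrow> nat set" and x assume R: "R \<in> {R :: nat \<Rightarrow> nat set. \<forall>s. R s \<subseteq> (if s < t then {1..s} else {})}" and x: "x \<in> Sigma UNIV R"
      obtain s i where si: "x = (s, i)" "i \<in> R s" using x by auto
      have "R s \<subseteq> (if s < t then {1..s} else {})" using R by blast
      then have "s < t \<and> i \<in> {1..s}" using si(2) by (auto split: if_splits)
      then show "x \<in> {..<t} \<times> {1..t}" using si by auto
    qed
  qed auto
  show "inj_on (\<lambda>R. Sigma UNIV R) {R :: nat \<Rightarrow> nat set. \<forall>s. R s \<subseteq> (if s < t then {1..s} else {})}"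
    by (auto simp: inj_on_def fun_eq_iff)
qed

lemma hist_in: "hist E p a t \<in> {R :: nat \<Rightarrow> nat set. \<forall>s. R s \<subseteq> (if s < t then {1..s} else {})}"
  by (auto simp: hist_def dec_set_def)

lemma iff_set: "{p\<in>space M. X p} \<in> sets M \<Longrightarrow> {p\<in>space M. (b \<longleftrightarrow> c \<and> X p)} \<in> sets M"
proof (cases b; cases c)
  assume "{p\<in>space M. X p} \<in> sets M"
  then have "{p\<in>space M. \<not> X p} \<in> sets M" by (rule sets.sets_Collect_neg)
  then show "\<not> b \<Longrightarrow> c \<Longrightarrow> {p\<in>space M. (b \<longleftrightarrow> c \<and> X p)} \<in> sets M" by simp
qed auto

abbreviation "NN \<equiv> Pi\<^sub>M (UNIV :: nat set) (\<lambda>_. (borel :: real measure))"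

lemma comp_meas[measurable]: "(\<lambda>p. p i) \<in> borel_measurable NN"
  by (rule measurable_component_singleton) simp

lemma D5: "(\<lambda>p. saff_alpha g h E p t) \<in> borel_measurable NN \<and> (\<lambda>p. saff_lambda g h E p t) \<in> borel_measurable NN"
proof (induction t rule: less_induct)
  case (less t)
  show ?case
  proof (cases "t = 0")
    case True then show ?thesis by (simp add: D0)
  next
    case False
    define F where "F p = (hist E p (saff_alpha g h E p) t, hist E p (saff_lambda g h E p) t)" for p
    let ?Hs = "{R :: nat \<Rightarrow> nat set. \<forall>s. R s \<subseteq> (if s < t then {1..s} else {})}"
    have "F \<in> measurable NN (count_space UNIV)"
    proof (rule measurable_finite_range)
      have "F ` space NN \<subseteq> ?Hs \<times> ?Hs" by (auto simp: F_def hist_def dec_set_def)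
      then show "finite (F ` space NN)" by (rule finite_subset) (simp add: finite_hists)
      fix y assume y: "y \<in> F ` space NN"
      then obtain H C where yHC: "y = (H, C)" and H: "H \<in> ?Hs" and C: "C \<in> ?Hs" using hist_in by (auto simp: F_def)
      have "{x\<in>space NN. F x = y} = {p\<in>space NN. \<forall>s\<in>{..<t}. \<forall>i\<in>{1..s}.
          (i \<in> H s \<longleftrightarrow> E i = s \<and> p i \<le> saff_alpha g h E p i) \<and> (i \<in> C s \<longleftrightarrow> E i = s \<and> p i \<le> saff_lambda g h E p i)}"
      proof -
        have "F p = (H, C) \<longleftrightarrow> (\<forall>s\<in>{..<t}. \<forall>i\<in>{1..s}.
          (i \<in> H s \<longleftrightarrow> E i = s \<and> p i \<le> saff_alpha g h E p i) \<and> (i \<in> C s \<longleftrightarrow> E i = s \<and> p i \<le> saff_lambda g h E p i))" for p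
        proof -
          have "F p = (H, C) \<longleftrightarrow> (\<forall>s. hist E p (saff_alpha g h E p) t s = H s \<and> hist E p (saff_lambda g h E p) t s = C s)"
            by (auto simp: F_def fun_eq_iff)
          also have "\<dots> \<longleftrightarrow> (\<forall>s<t. dec_set E p (saff_alpha g h E p) s = H s \<and> dec_set E p (saff_lambda g h E p) s = C s)"
          proof
            assume L: "\<forall>s. hist E p (saff_alpha g h E p) t s = H s \<and> hist E p (saff_lambda g h E p) t s = C s"
            show "\<forall>s<t. dec_set E p (saff_alpha g h E p) s = H s \<and> dec_set E p (saff_lambda g h E p) s = C s"
            proof (intro allI impI)
              fix s assume "s < t"
              then show "dec_set E p (saff_alpha g h E p) s = H s \<and> dec_set E p (saff_lambda g h E p) s = C s"
                using L[rule_format, of s] by (simp add: hist_def)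
            qed
          next
            assume L: "\<forall>s<t. dec_set E p (saff_alpha g h E p) s = H s \<and> dec_set E p (saff_lambda g h E p) s = C s"
            show "\<forall>s. hist E p (saff_alpha g h E p) t s = H s \<and> hist E p (saff_lambda g h E p) t s = C s"
            proof
              fix s
              show "hist E p (saff_alpha g h E p) t s = H s \<and> hist E p (saff_lambda g h E p) t s = C s"
              proof (cases "s < t")
                case True then show ?thesis using L by (simp add: hist_def)
              next
                case False
                have "H s \<subseteq> (if s < t then {1..s} else {})" "C s \<subseteq> (if s < t then {1..s} else {})"
                  using H C by blast+
                then show ?thesis using False by (simp add: hist_def)
              qed
            qed
          qed
          also have "\<dots> \<longleftrightarrow> (\<forall>s\<in>{..<t}. \<forall>i\<in>{1..s}.
             (i \<in> H s \<longleftrightarrow> E i = s \<and> p i \<le> saff_alpha g h E p i) \<and> (i \<in> C s \<longleftrightarrow> E i = s \<and> p i \<le> saff_lambda g h E p i))"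
          proof -
            have "dec_set E p a s = K s \<longleftrightarrow> (\<forall>i\<in>{1..s}. (i \<in> K s \<longleftrightarrow> E i = s \<and> p i \<le> a i))"
              if "K \<in> ?Hs" "s < t" for K a s
            proof -
              have "K s \<subseteq> (if s < t then {1..s} else {})" using that(1) by blast
              then have "K s \<subseteq> {1..s}" using that(2) by simp
              then show ?thesis unfolding dec_set_def by blast
            qed
            then show ?thesis using H C by auto
          qed
          finally show ?thesis .
        qed
        then show ?thesis using yHC by auto
      qed
      also have "\<dots> \<in> sets NN"
      proof -
        define A where "A i p = (if i < t then saff_alpha g h E p i else 0)" for i p
        define L where "L i p = (if i < t then saff_lambda g h E p i else 0)" for i p
        have [measurable]: "(\<lambda>p. A i p) \<in> borel_measurable NN" "(\<lambda>p. L i p) \<in> borel_measurable NN" for i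
          using less.IH[of i] unfolding A_def L_def by (cases "i < t"; simp)+
        have "{p \<in> space NN. \<forall>s\<in>{..<t}. \<forall>i\<in>{1..s}.
          (i \<in> H s \<longleftrightarrow> E i = s \<and> p i \<le> A i p) \<and> (i \<in> C s \<longleftrightarrow> E i = s \<and> p i \<le> L i p)} \<in> sets NN"
        proof (intro sets.sets_Collect_finite_All sets.sets_Collect_conj iff_set finite_lessThan finite_atLeastAtMost)
          fix i
          show "{p \<in> space NN. p i \<le> A i p} \<in> sets NN" by measurable
          show "{p \<in> space NN. p i \<le> L i p} \<in> sets NN" by measurable
        qed
        then have "Measurable.pred NN (\<lambda>p. \<forall>s\<in>{..<t}. \<forall>i\<in>{1..s}.
          (i \<in> H s \<longleftrightarrow> E i = s \<and> p i \<le> A i p) \<and> (i \<in> C s \<longleftrightarrow> E i = s \<and> p i \<le> L i p))"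
          by (simp only: Measurable.pred_def)
        moreover have "(\<lambda>p. \<forall>s\<in>{..<t}. \<forall>i\<in>{1..s}.
          (i \<in> H s \<longleftrightarrow> E i = s \<and> p i \<le> A i p) \<and> (i \<in> C s \<longleftrightarrow> E i = s \<and> p i \<le> L i p))
          = (\<lambda>p. \<forall>s\<in>{..<t}. \<forall>i\<in>{1..s}.
          (i \<in> H s \<longleftrightarrow> E i = s \<and> p i \<le> saff_alpha g h E p i) \<and> (i \<in> C s \<longleftrightarrow> E i = s \<and> p i \<le> saff_lambda g h E p i))"
          unfolding A_def L_def by (intro ext ball_cong refl) auto
        ultimately have "Measurable.pred NN (\<lambda>p. \<forall>s\<in>{..<t}. \<forall>i\<in>{1..s}.
          (i \<in> H s \<longleftrightarrow> E i = s \<and> p i \<le> saff_alpha g h E p i) \<and> (i \<in> C s \<longleftrightarrow> E i = s \<and> p i \<le> saff_lambda g h E p i))"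
          by (rule back_subst)
        then show ?thesis by (simp only: Measurable.pred_def)
      qed
      finally show "{x\<in>space NN. F x = y} \<in> sets NN" .
    qed
    then have FF: "(\<lambda>p. (\<lambda>(R, C). g t R C) (F p)) \<in> borel_measurable NN" "(\<lambda>p. (\<lambda>(R, C). h t R C) (F p)) \<in> borel_measurable NN"
      by (auto intro: measurable_compose[OF _ borel_measurable_count_space])
    have "1 \<le> t" using False by simp
    then have eqs: "(\<lambda>p. saff_alpha g h E p t) = (\<lambda>p. (\<lambda>(R, C). g t R C) (F p))"
      "(\<lambda>p. saff_lambda g h E p t) = (\<lambda>p. (\<lambda>(R, C). h t R C) (F p))"
      unfolding F_def by (simp_all only: case_prod_conv D2)
    show ?thesis unfolding eqs using FF by blast
  qed
qed



lemma indep_i: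
  assumes M: "prob_space M" and meas: "\<And>i. P i \<in> borel_measurable M"
    and indep: "null_indep M H0 P" and i: "i \<in> H0"
  shows "prob_space.indep_var M NN (\<lambda>\<omega>. (\<lambda>j. P i \<omega>)) NN (\<lambda>\<omega>. (\<lambda>j. if j = i then 0 else P j \<omega>))"
proof -
  interpret prob_space M by fact
  define S where "S = (\<lambda>k. case k of Some i \<Rightarrow> {i} | None \<Rightarrow> - H0)"
  define I where "I = Some ` H0 \<union> {None}"
  define M' where "M' = (\<lambda>k. Pi\<^sub>M (S k) (\<lambda>_. (borel :: real measure)))"
  define X where "X = (\<lambda>k \<omega>. restrict (\<lambda>j. P j \<omega>) (S k))"
  have ind: "indep_vars M' X I" using indep unfolding null_indep_def Let_def S_def M'_def X_def I_def by simp
  have "indep_var (Pi\<^sub>M {Some i} M') (\<lambda>\<omega>. restrict (\<lambda>k. X k \<omega>) {Some i})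
     (Pi\<^sub>M (I - {Some i}) M') (\<lambda>\<omega>. restrict (\<lambda>k. X k \<omega>) (I - {Some i}))"
    by (rule indep_var_restrict[OF ind]) (auto simp: I_def i)
  moreover have "(\<lambda>z. \<lambda>j::nat. z (Some i) i) \<in> measurable (Pi\<^sub>M {Some i} M') NN"
  proof (rule measurable_PiM_single')
    fix j :: nat
    have "(\<lambda>z. z (Some i)) \<in> measurable (Pi\<^sub>M {Some i} M') (M' (Some i))"
      by (rule measurable_component_singleton) simp
    moreover have "(\<lambda>w. w i) \<in> measurable (M' (Some i)) borel"
      unfolding M'_def S_def by (rule measurable_component_singleton) simp
    ultimately show "(\<lambda>z. z (Some i) i) \<in> measurable (Pi\<^sub>M {Some i} M') borel"
      by (rule measurable_compose)
  qed auto
  moreover have "(\<lambda>z. \<lambda>j::nat. if j = i then 0 else if j \<in> H0 then z (Some j) j else z None j) \<in> measurable (Pi\<^sub>M (I - {Some i}) M') NN"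
  proof (rule measurable_PiM_single')
    fix j :: nat
    show "(\<lambda>z. if j = i then 0 else if j \<in> H0 then z (Some j) j else z None j) \<in> measurable (Pi\<^sub>M (I - {Some i}) M') borel"
    proof (cases "j = i")
      case True then show ?thesis by simp
    next
      case False
      show ?thesis
      proof (cases "j \<in> H0")
        case True
        have "(\<lambda>z. z (Some j)) \<in> measurable (Pi\<^sub>M (I - {Some i}) M') (M' (Some j))"
          by (rule measurable_component_singleton) (use True False in \<open>auto simp: I_def\<close>)
        moreover have "(\<lambda>w. w j) \<in> measurable (M' (Some j)) borel"
          unfolding M'_def S_def by (rule measurable_component_singleton) simp
        ultimately have "(\<lambda>z. z (Some j) j) \<in> measurable (Pi\<^sub>M (I - {Some i}) M') borel"
          by (rule measurable_compose)
        then show ?thesis using True False by simp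
      next
        case F2: False
        have "(\<lambda>z. z None) \<in> measurable (Pi\<^sub>M (I - {Some i}) M') (M' None)"
          by (rule measurable_component_singleton) (auto simp: I_def)
        moreover have "(\<lambda>w. w j) \<in> measurable (M' None) borel"
          unfolding M'_def S_def by (rule measurable_component_singleton) (use F2 in simp)
        ultimately have "(\<lambda>z. z None j) \<in> measurable (Pi\<^sub>M (I - {Some i}) M') borel"
          by (rule measurable_compose)
        then show ?thesis using F2 False by simp
      qed
    qed
  qed auto
  ultimately have "indep_var NN ((\<lambda>z. \<lambda>j::nat. z (Some i) i) \<circ> (\<lambda>\<omega>. restrict (\<lambda>k. X k \<omega>) {Some i}))
      NN ((\<lambda>z. \<lambda>j::nat. if j = i then 0 else if j \<in> H0 then z (Some j) j else z None j) \<circ> (\<lambda>\<omega>. restrict (\<lambda>k. X k \<omega>) (I - {Some i})))"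
    by (rule indep_var_compose)
  moreover have "(\<lambda>z. \<lambda>j::nat. z (Some i) i) \<circ> (\<lambda>\<omega>. restrict (\<lambda>k. X k \<omega>) {Some i}) = (\<lambda>\<omega>. (\<lambda>j. P i \<omega>))"
    by (auto simp: fun_eq_iff X_def S_def)
  moreover have "(\<lambda>z. \<lambda>j::nat. if j = i then 0 else if j \<in> H0 then z (Some j) j else z None j) \<circ> (\<lambda>\<omega>. restrict (\<lambda>k. X k \<omega>) (I - {Some i}))
      = (\<lambda>\<omega>. (\<lambda>j. if j = i then 0 else P j \<omega>))"
    by (auto simp: fun_eq_iff X_def S_def I_def)
  ultimately show ?thesis by simp
qed



lemma card_filter: "finite A \<Longrightarrow> real (card {j\<in>A. P j}) = (\<Sum>j\<in>A. if P j then 1 else 0)"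
proof -
  assume "finite A"
  have "real (card {j\<in>A. P j}) = (\<Sum>j\<in>{j\<in>A. P j}. 1)" by simp
  also have "\<dots> = (\<Sum>j\<in>A. if P j then 1 else 0)" using \<open>finite A\<close> by (rule sum.inter_filter)
  finally show ?thesis .
qed

lemma card_rej: "real (card (rej_set E p a t)) = (\<Sum>j\<in>{1..t}. if E j \<le> t \<and> p j \<le> a j then 1 else 0)"
  unfolding rej_set_def by (rule card_filter) simp

lemma card_rej_H0: "real (card (rej_set E p a t \<inter> H0)) = (\<Sum>j\<in>{1..t} \<inter> H0. if E j \<le> t \<and> p j \<le> a j then 1 else 0)"
proof -
  have "rej_set E p a t \<inter> H0 = {j\<in>{1..t} \<inter> H0. E j \<le> t \<and> p j \<le> a j}" by (auto simp: rej_set_def)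
  moreover have fin: "finite ({1..t} \<inter> H0)" by simp
  ultimately show ?thesis using card_filter[OF fin, of "\<lambda>j. E j \<le> t \<and> p j \<le> a j"] by (simp only:)
qed

lemma al_meas[measurable]: "(\<lambda>p. saff_alpha g h E p t) \<in> borel_measurable NN"
  using D5 by blast
lemma la_meas[measurable]: "(\<lambda>p. saff_lambda g h E p t) \<in> borel_measurable NN"
  using D5 by blast

lemma le_set_meas[measurable]: "{p \<in> space NN. p i \<le> saff_alpha g h E p i} \<in> sets NN"
  by measurable

lemma card_meas[measurable]: "(\<lambda>p. real (card (rej_set E p (saff_alpha g h E p) t))) \<in> borel_measurable NN"
  unfolding card_rej by measurable


definition phi :: "(nat \<Rightarrow> nat) \<Rightarrow> (nat \<Rightarrow> real) \<Rightarrow> (nat \<Rightarrow> real) \<Rightarrow> nat \<Rightarrow> nat \<Rightarrow> real" where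
  "phi E a p t i = (if E i \<le> t then 1 / real (max (card (rej_set E p a t)) 1) else 0)"

lemma phi_meas[measurable]: "(\<lambda>p. phi E (saff_alpha g h E p) p t i) \<in> borel_measurable NN"
  unfolding phi_def of_nat_max by measurable

lemma phi_nonneg: "0 \<le> phi E a p t i"
  by (simp add: phi_def)

definition qf :: "(nat \<Rightarrow> real) \<Rightarrow> nat \<Rightarrow> nat \<Rightarrow> real" where
  "qf p i = (\<lambda>j. if j = i then 0 else p j)"

locale proc =
  fixes g h :: "nat \<Rightarrow> (nat \<Rightarrow> nat set) \<Rightarrow> (nat \<Rightarrow> nat set) \<Rightarrow> real" and E :: "nat \<Rightarrow> nat"
  assumes gh: "\<And>t R C. 1 \<le> t \<Longrightarrow> adm_hist t R \<Longrightarrow> adm_hist t C \<Longrightarrow> 0 \<le> g t R C \<and> g t R C \<le> h t R C"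
    and mg: "mono_rule2 g" and mh: "mono_rule2 h"
    and dec_time: "\<And>t. t \<le> E t"
begin

abbreviation "al \<equiv> saff_alpha g h E"
abbreviation "la \<equiv> saff_lambda g h E"

lemma al_nonneg: "0 \<le> al p j \<and> al p j \<le> la p j"
proof (cases "j = 0")
  case True then show ?thesis by (simp add: D0)
next
  case False
  then have "1 \<le> j" by simp
  then show ?thesis using gh[OF \<open>1 \<le> j\<close> adm_hist adm_hist] D2[OF \<open>1 \<le> j\<close>] by metis
qed

lemma qf_same: assumes "1 \<le> i" shows "al (qf p i) i = al p i \<and> la (qf p i) i = la p i"
proof -
  have "qf p i j = p j" if "E j < i" for j
  proof -
    have "j \<noteq> i" using that dec_time[of i] by auto
    then show ?thesis by (simp add: qf_def)
  qed
  then show ?thesis using D3[of E i "qf p i" p g h] by metis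
qed

lemma qf_rej_sub: assumes "1 \<le> i" shows "rej_set E p (al p) t \<subseteq> rej_set E (qf p i) (al (qf p i)) t"
proof -
  have hyp: "qf p i j \<le> p j \<or> (qf p i j \<le> al (qf p i) j \<and> qf p i j \<le> la (qf p i) j)" for j
    using al_nonneg[of "qf p i" i] by (cases "j = i") (auto simp: qf_def)
  have "\<And>j. al p j \<le> al (qf p i) j" using D4[OF mg mh hyp] by blast
  moreover have "qf p i j \<le> p j \<or> qf p i j \<le> al (qf p i) j" for j using hyp[of j] by blast
  ultimately show ?thesis by (rule rej_mono)
qed

lemma qf_rej_eq: assumes "1 \<le> i" "p i \<le> al p i" shows "rej_set E p (al p) t = rej_set E (qf p i) (al (qf p i)) t"
proof
  show "rej_set E p (al p) t \<subseteq> rej_set E (qf p i) (al (qf p i)) t" using qf_rej_sub[OF assms(1)] .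
  have hyp: "p j \<le> qf p i j \<or> (p j \<le> al p j \<and> p j \<le> la p j)" for j
    using al_nonneg[of p i] assms(2) by (cases "j = i") (auto simp: qf_def)
  have "\<And>j. al (qf p i) j \<le> al p j" using D4[OF mg mh hyp] by blast
  moreover have "p j \<le> qf p i j \<or> p j \<le> al p j" for j using hyp[of j] by blast
  ultimately show "rej_set E (qf p i) (al (qf p i)) t \<subseteq> rej_set E p (al p) t" by (rule rej_mono)
qed

lemma qf_phi: assumes "1 \<le> i" shows "phi E (al (qf p i)) (qf p i) t i \<le> phi E (al p) p t i"
proof -
  have "card (rej_set E p (al p) t) \<le> card (rej_set E (qf p i) (al (qf p i)) t)"
    by (rule card_mono[OF _ qf_rej_sub[OF assms]]) (simp add: rej_set_def)
  then show ?thesis unfolding phi_def by (auto intro!: divide_left_mono simp: of_nat_max)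
qed

end


locale prob_proc = proc g h E for g h E +
  fixes M :: "'w measure" and P :: "nat \<Rightarrow> 'w \<Rightarrow> real" and H0 :: "nat set"
  assumes M: "prob_space M" and meas: "\<And>i. P i \<in> borel_measurable M"
    and superunif: "\<And>i u. i \<in> H0 \<Longrightarrow> 0 \<le> u \<Longrightarrow> u \<le> 1 \<Longrightarrow>
                       measure M {\<omega> \<in> space M. P i \<omega> \<le> u} \<le> u"
    and indep: "null_indep M H0 P"
begin

lemma Pv_meas[measurable]: "(\<lambda>\<omega>. (\<lambda>j. P j \<omega>)) \<in> measurable M NN"
  by (rule measurable_PiM_single') (auto intro: meas)

lemma key:
  assumes i: "i \<in> H0" "1 \<le> i"
  shows "(\<integral>\<^sup>+\<omega>. ennreal (if P i \<omega> \<le> al (\<lambda>j. P j \<omega>) i then phi E (al (\<lambda>j. P j \<omega>)) (\<lambda>j. P j \<omega>) t i else 0) \<partial>M)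
    \<le> (\<integral>\<^sup>+\<omega>. ennreal (al (qf (\<lambda>j. P j \<omega>) i) i * phi E (al (qf (\<lambda>j. P j \<omega>) i)) (qf (\<lambda>j. P j \<omega>) i) t i) \<partial>M)"
proof -
  have "(\<integral>\<^sup>+\<omega>. ennreal (if P i \<omega> \<le> al (\<lambda>j. P j \<omega>) i then phi E (al (\<lambda>j. P j \<omega>)) (\<lambda>j. P j \<omega>) t i else 0) \<partial>M)
    = (\<integral>\<^sup>+\<omega>. ennreal (if (\<lambda>j. P i \<omega>) i \<le> (\<lambda>q. al q i) (qf (\<lambda>j. P j \<omega>) i)
          then (\<lambda>q. phi E (al q) q t i) (qf (\<lambda>j. P j \<omega>) i) else 0) \<partial>M)"
  proof (intro nn_integral_cong)
    fix \<omega>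
    show "ennreal (if P i \<omega> \<le> al (\<lambda>j. P j \<omega>) i then phi E (al (\<lambda>j. P j \<omega>)) (\<lambda>j. P j \<omega>) t i else 0) =
      ennreal (if (\<lambda>j. P i \<omega>) i \<le> (\<lambda>q. al q i) (qf (\<lambda>j. P j \<omega>) i)
          then (\<lambda>q. phi E (al q) q t i) (qf (\<lambda>j. P j \<omega>) i) else 0)"
    proof (cases "P i \<omega> \<le> al (\<lambda>j. P j \<omega>) i")
      case True
      have "rej_set E (\<lambda>j. P j \<omega>) (al (\<lambda>j. P j \<omega>)) t = rej_set E (qf (\<lambda>j. P j \<omega>) i) (al (qf (\<lambda>j. P j \<omega>) i)) t"
        using qf_rej_eq[OF i(2), of "\<lambda>j. P j \<omega>"] True by simp
      then show ?thesis using True qf_same[OF i(2), of "\<lambda>j. P j \<omega>"] by (simp add: phi_def)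
    next
      case False
      then show ?thesis using qf_same[OF i(2), of "\<lambda>j. P j \<omega>"] by simp
    qed
  qed
  also have "\<dots> \<le> (\<integral>\<^sup>+\<omega>. ennreal ((\<lambda>q. al q i) (qf (\<lambda>j. P j \<omega>) i) * (\<lambda>q. phi E (al q) q t i) (qf (\<lambda>j. P j \<omega>) i)) \<partial>M)"
  proof (rule outer_bound1[OF M _ comp_meas, where X="\<lambda>\<omega> j. P i \<omega>" and Y="\<lambda>\<omega>. qf (\<lambda>j. P j \<omega>) i" and a="\<lambda>q. al q i" and \<phi>="\<lambda>q. phi E (al q) q t i"])
    show "prob_space.indep_var M NN (\<lambda>\<omega> j. P i \<omega>) NN (\<lambda>\<omega>. qf (\<lambda>j. P j \<omega>) i)"
      using indep_i[OF M meas indep i(1)] by (simp add: qf_def)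
    show "measure M {\<omega> \<in> space M. P i \<omega> \<le> u} \<le> u" if "0 \<le> u" "u \<le> 1" for u
      using superunif[OF i(1) that] .
    show "\<And>y. 0 \<le> al y i" "\<And>y. 0 \<le> phi E (al y) y t i" using al_nonneg phi_nonneg by auto
  qed measurable
  finally show ?thesis by simp
qed


lemma T_meas[measurable]: "(\<lambda>p. if p i \<le> al p i then phi E (al p) p t i else 0) \<in> borel_measurable NN"
  by measurable

lemma FDP_sum: "FDP H0 E p (al p) t = (\<Sum>i\<in>{1..t} \<inter> H0. if p i \<le> al p i then phi E (al p) p t i else 0)"
proof -
  have "FDP H0 E p (al p) t = (\<Sum>i\<in>{1..t} \<inter> H0. (if E i \<le> t \<and> p i \<le> al p i then 1 else 0) / real (max (card (rej_set E p (al p) t)) 1))"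
    unfolding FDP_def card_rej_H0 by (simp add: sum_divide_distrib)
  also have "\<dots> = (\<Sum>i\<in>{1..t} \<inter> H0. if p i \<le> al p i then phi E (al p) p t i else 0)"
    by (intro sum.cong refl) (auto simp: phi_def)
  finally show ?thesis .
qed

lemma assemble:
  fixes B :: "nat \<Rightarrow> (nat \<Rightarrow> real) \<Rightarrow> real" and \<alpha> :: real
  assumes Bmeas: "\<And>i. B i \<in> borel_measurable NN" and Bnn: "\<And>i p. 0 \<le> B i p"
    and per_i: "\<And>i. i \<in> H0 \<Longrightarrow> 1 \<le> i \<Longrightarrow> i \<le> t \<Longrightarrow>
      (\<integral>\<^sup>+\<omega>. ennreal (al (qf (\<lambda>j. P j \<omega>) i) i * phi E (al (qf (\<lambda>j. P j \<omega>) i)) (qf (\<lambda>j. P j \<omega>) i) t i) \<partial>M)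
      \<le> (\<integral>\<^sup>+\<omega>. ennreal (B i (\<lambda>j. P j \<omega>)) \<partial>M)"
    and sumB: "\<And>\<omega>. \<omega> \<in> space M \<Longrightarrow> (\<Sum>i\<in>{1..t}. B i (\<lambda>j. P j \<omega>)) \<le> \<alpha>"
    and a0: "0 \<le> \<alpha>"
  shows "FDR M H0 E P al t \<le> \<alpha>"
proof -
  interpret prob_space M by (rule M)
  note Bmeas[measurable]
  define T where "T i p = (if p i \<le> al p i then phi E (al p) p t i else 0)" for i p
  have Tmeas[measurable]: "T i \<in> borel_measurable NN" for i unfolding T_def by measurable
  have Tnn: "0 \<le> T i p" for i p by (simp add: T_def phi_nonneg)
  have F: "FDR M H0 E P al t = integral\<^sup>L M (\<lambda>\<omega>. \<Sum>i\<in>{1..t} \<inter> H0. T i (\<lambda>j. P j \<omega>))"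
    unfolding FDR_def FDP_sum T_def ..
  also have "\<dots> = enn2real (\<integral>\<^sup>+\<omega>. ennreal (\<Sum>i\<in>{1..t} \<inter> H0. T i (\<lambda>j. P j \<omega>)) \<partial>M)"
    by (rule integral_eq_nn_integral) (auto intro!: sum_nonneg Tnn)
  finally have F2: "FDR M H0 E P al t = enn2real (\<integral>\<^sup>+\<omega>. ennreal (\<Sum>i\<in>{1..t} \<inter> H0. T i (\<lambda>j. P j \<omega>)) \<partial>M)" .
  have "(\<integral>\<^sup>+\<omega>. ennreal (\<Sum>i\<in>{1..t} \<inter> H0. T i (\<lambda>j. P j \<omega>)) \<partial>M)
      = (\<integral>\<^sup>+\<omega>. (\<Sum>i\<in>{1..t} \<inter> H0. ennreal (T i (\<lambda>j. P j \<omega>))) \<partial>M)"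
    by (intro nn_integral_cong) (simp add: sum_ennreal Tnn)
  also have "\<dots> = (\<Sum>i\<in>{1..t} \<inter> H0. (\<integral>\<^sup>+\<omega>. ennreal (T i (\<lambda>j. P j \<omega>)) \<partial>M))"
    by (rule nn_integral_sum) measurable
  also have "\<dots> \<le> (\<Sum>i\<in>{1..t} \<inter> H0. (\<integral>\<^sup>+\<omega>. ennreal (B i (\<lambda>j. P j \<omega>)) \<partial>M))"
  proof (rule sum_mono)
    fix i assume "i \<in> {1..t} \<inter> H0"
    then have i: "i \<in> H0" "1 \<le> i" "i \<le> t" by auto
    show "(\<integral>\<^sup>+\<omega>. ennreal (T i (\<lambda>j. P j \<omega>)) \<partial>M) \<le> (\<integral>\<^sup>+\<omega>. ennreal (B i (\<lambda>j. P j \<omega>)) \<partial>M)"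
      using key[OF i(1,2), of t] per_i[OF i] unfolding T_def by (rule order_trans)
  qed
  also have "\<dots> = (\<integral>\<^sup>+\<omega>. (\<Sum>i\<in>{1..t} \<inter> H0. ennreal (B i (\<lambda>j. P j \<omega>))) \<partial>M)"
    by (rule nn_integral_sum[symmetric]) measurable
  also have "\<dots> \<le> (\<integral>\<^sup>+\<omega>. ennreal \<alpha> \<partial>M)"
  proof (rule nn_integral_mono)
    fix \<omega> assume \<omega>: "\<omega> \<in> space M"
    have "(\<Sum>i\<in>{1..t} \<inter> H0. B i (\<lambda>j. P j \<omega>)) \<le> (\<Sum>i\<in>{1..t}. B i (\<lambda>j. P j \<omega>))"
      by (rule sum_mono2) (auto intro: Bnn)
    also have "\<dots> \<le> \<alpha>" using sumB[OF \<omega>] .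
    finally show "(\<Sum>i\<in>{1..t} \<inter> H0. ennreal (B i (\<lambda>j. P j \<omega>))) \<le> ennreal \<alpha>"
      by (simp add: sum_ennreal Bnn ennreal_leI)
  qed
  also have "\<dots> = ennreal \<alpha>" by (simp add: emeasure_space_1)
  finally have le: "(\<integral>\<^sup>+\<omega>. ennreal (\<Sum>i\<in>{1..t} \<inter> H0. T i (\<lambda>j. P j \<omega>)) \<partial>M) \<le> ennreal \<alpha>" .
  have "enn2real (\<integral>\<^sup>+\<omega>. ennreal (\<Sum>i\<in>{1..t} \<inter> H0. T i (\<lambda>j. P j \<omega>)) \<partial>M) \<le> enn2real (ennreal \<alpha>)"
    by (rule enn2real_mono[OF le]) simp
  then show ?thesis using F2 a0 by simp
qed


lemma rej_before_le: "rej_before E p a t \<le> card (rej_set E p a t)"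
  unfolding rej_before_def rej_set_def by (rule card_mono) auto

lemma ratio_le:
  assumes "S \<le> \<alpha> * real (max (rej_before E p a t) 1)" "0 \<le> \<alpha>"
  shows "S / real (max (card (rej_set E p a t)) 1) \<le> \<alpha>"
proof -
  have "real (max (rej_before E p a t) 1) \<le> real (max (card (rej_set E p a t)) 1)"
    using rej_before_le[of p a t] by simp
  then have "S \<le> \<alpha> * real (max (card (rej_set E p a t)) 1)"
    using assms by (meson mult_left_mono order_trans)
  moreover have "0 < real (max (card (rej_set E p a t)) 1)" by simp
  ultimately show ?thesis by (simp add: divide_le_eq)
qed

lemma lord_final:
  fixes \<alpha> :: real
  assumes hyp: "\<And>\<omega>. \<omega> \<in> space M \<Longrightarrow> (\<Sum>j\<in>{1..t}. al (\<lambda>i. P i \<omega>) j)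
              \<le> \<alpha> * real (max (rej_before E (\<lambda>i. P i \<omega>) (al (\<lambda>i. P i \<omega>)) t) 1)"
    and a0: "0 \<le> \<alpha>"
  shows "FDR M H0 E P al t \<le> \<alpha>"
proof (rule assemble[where B="\<lambda>i p. al p i * phi E (al p) p t i"])
  show "\<And>i. (\<lambda>p. al p i * phi E (al p) p t i) \<in> borel_measurable NN" by measurable
  show "\<And>i p. 0 \<le> al p i * phi E (al p) p t i" using al_nonneg phi_nonneg by (simp add: mult_nonneg_nonneg)
  show "0 \<le> \<alpha>" by fact
  fix i assume i: "i \<in> H0" "1 \<le> i" "i \<le> t"
  show "(\<integral>\<^sup>+\<omega>. ennreal (al (qf (\<lambda>j. P j \<omega>) i) i * phi E (al (qf (\<lambda>j. P j \<omega>) i)) (qf (\<lambda>j. P j \<omega>) i) t i) \<partial>M)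
      \<le> (\<integral>\<^sup>+\<omega>. ennreal (al (\<lambda>j. P j \<omega>) i * phi E (al (\<lambda>j. P j \<omega>)) (\<lambda>j. P j \<omega>) t i) \<partial>M)"
  proof (rule nn_integral_mono, rule ennreal_leI)
    fix \<omega>
    show "al (qf (\<lambda>j. P j \<omega>) i) i * phi E (al (qf (\<lambda>j. P j \<omega>) i)) (qf (\<lambda>j. P j \<omega>) i) t i
       \<le> al (\<lambda>j. P j \<omega>) i * phi E (al (\<lambda>j. P j \<omega>)) (\<lambda>j. P j \<omega>) t i"
      using qf_same[OF i(2)] qf_phi[OF i(2)] al_nonneg by (simp add: mult_left_mono)
  qed
next
  fix \<omega> assume \<omega>: "\<omega> \<in> space M"
  let ?p = "\<lambda>j. P j \<omega>"
  have "(\<Sum>i\<in>{1..t}. al ?p i * phi E (al ?p) ?p t i) \<le> (\<Sum>i\<in>{1..t}. al ?p i * (1 / real (max (card (rej_set E ?p (al ?p) t)) 1)))"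
    by (intro sum_mono mult_left_mono) (auto simp: phi_def al_nonneg)
  also have "\<dots> = (\<Sum>i\<in>{1..t}. al ?p i) / real (max (card (rej_set E ?p (al ?p) t)) 1)"
    by (simp add: sum_divide_distrib)
  also have "\<dots> \<le> \<alpha>" using ratio_le[OF hyp[OF \<omega>] a0] .
  finally show "(\<Sum>i\<in>{1..t}. al ?p i * phi E (al ?p) ?p t i) \<le> \<alpha>" .
qed

lemma saff_final:
  fixes \<alpha> :: real
  assumes la1: "\<And>p j. la p j < 1"
    and hyp: "\<And>\<omega>. \<omega> \<in> space M \<Longrightarrow>
            (\<Sum>j\<in>{1..t}. al (\<lambda>i. P i \<omega>) j / (1 - la (\<lambda>i. P i \<omega>) j)
               * ((if P j \<omega> > la (\<lambda>i. P i \<omega>) j \<and> E j < t then 1 else 0)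
                  + (if E j \<ge> t then 1 else 0)))
              \<le> \<alpha> * real (max (rej_before E (\<lambda>i. P i \<omega>) (al (\<lambda>i. P i \<omega>)) t) 1)"
    and a0: "0 \<le> \<alpha>"
  shows "FDR M H0 E P al t \<le> \<alpha>"
proof (rule assemble[where B="\<lambda>i p. if p i > la p i then al p i / (1 - la p i) * phi E (al p) p t i else 0"])
  have cnn: "0 \<le> al p i / (1 - la p i)" for p i using al_nonneg[of p i] la1[of p i] by simp
  show "\<And>i. (\<lambda>p. if p i > la p i then al p i / (1 - la p i) * phi E (al p) p t i else 0) \<in> borel_measurable NN" by measurable
  show "\<And>i p. 0 \<le> (if p i > la p i then al p i / (1 - la p i) * phi E (al p) p t i else 0)"
  proof -
    fix i p
    show "0 \<le> (if p i > la p i then al p i / (1 - la p i) * phi E (al p) p t i else 0)"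
      using mult_nonneg_nonneg[OF cnn phi_nonneg] by simp
  qed
  show "0 \<le> \<alpha>" by fact
  fix i assume i: "i \<in> H0" "1 \<le> i" "i \<le> t"
  interpret prob_space M by (rule M)
  define c where "c q = al q i / (1 - la q i) * phi E (al q) q t i" for q
  have [measurable]: "c \<in> borel_measurable NN" unfolding c_def by measurable
  have "(\<integral>\<^sup>+\<omega>. ennreal (al (qf (\<lambda>j. P j \<omega>) i) i * phi E (al (qf (\<lambda>j. P j \<omega>) i)) (qf (\<lambda>j. P j \<omega>) i) t i) \<partial>M)
      = (\<integral>\<^sup>+\<omega>. ennreal (c (qf (\<lambda>j. P j \<omega>) i) * (1 - (\<lambda>q. la q i) (qf (\<lambda>j. P j \<omega>) i))) \<partial>M)"
  proof (intro nn_integral_cong arg_cong[where f=ennreal])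
    fix \<omega>
    have "1 - la (qf (\<lambda>j. P j \<omega>) i) i \<noteq> 0" using la1[of "qf (\<lambda>j. P j \<omega>) i" i] by simp
    then show "al (qf (\<lambda>j. P j \<omega>) i) i * phi E (al (qf (\<lambda>j. P j \<omega>) i)) (qf (\<lambda>j. P j \<omega>) i) t i
      = c (qf (\<lambda>j. P j \<omega>) i) * (1 - (\<lambda>q. la q i) (qf (\<lambda>j. P j \<omega>) i))"
      by (simp add: c_def)
  qed
  also have "\<dots> \<le> (\<integral>\<^sup>+\<omega>. ennreal (if (\<lambda>j. P i \<omega>) i > (\<lambda>q. la q i) (qf (\<lambda>j. P j \<omega>) i) then c (qf (\<lambda>j. P j \<omega>) i) else 0) \<partial>M)"
  proof (rule outer_bound2[OF M _ comp_meas, where X="\<lambda>\<omega> j. P i \<omega>" and Y="\<lambda>\<omega>. qf (\<lambda>j. P j \<omega>) i" and l="\<lambda>q. la q i" and c=c])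
    show "prob_space.indep_var M NN (\<lambda>\<omega> j. P i \<omega>) NN (\<lambda>\<omega>. qf (\<lambda>j. P j \<omega>) i)"
      using indep_i[OF M meas indep i(1)] by (simp add: qf_def)
    show "measure M {\<omega> \<in> space M. P i \<omega> \<le> u} \<le> u" if "0 \<le> u" "u \<le> 1" for u
      using superunif[OF i(1) that] .
    show "\<And>y. 0 \<le> la y i" using al_nonneg order_trans by blast
    show "\<And>y. la y i < 1" by (rule la1)
    show "\<And>y. 0 \<le> c y" unfolding c_def using mult_nonneg_nonneg[OF cnn phi_nonneg] by blast
  qed measurable
  also have "\<dots> \<le> (\<integral>\<^sup>+\<omega>. ennreal (if P i \<omega> > la (\<lambda>j. P j \<omega>) i then al (\<lambda>j. P j \<omega>) i / (1 - la (\<lambda>j. P j \<omega>) i) * phi E (al (\<lambda>j. P j \<omega>)) (\<lambda>j. P j \<omega>) t i else 0) \<partial>M)"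
  proof (rule nn_integral_mono, rule ennreal_leI)
    fix \<omega>
    show "(if (\<lambda>j. P i \<omega>) i > (\<lambda>q. la q i) (qf (\<lambda>j. P j \<omega>) i) then c (qf (\<lambda>j. P j \<omega>) i) else 0)
      \<le> (if P i \<omega> > la (\<lambda>j. P j \<omega>) i then al (\<lambda>j. P j \<omega>) i / (1 - la (\<lambda>j. P j \<omega>) i) * phi E (al (\<lambda>j. P j \<omega>)) (\<lambda>j. P j \<omega>) t i else 0)"
    proof -
      let ?p = "\<lambda>j. P j \<omega>"
      have A: "la (qf ?p i) i = la ?p i" "al (qf ?p i) i = al ?p i" using qf_same[OF i(2), of ?p] by auto
      have X: "c (qf ?p i) \<le> al ?p i / (1 - la ?p i) * phi E (al ?p) ?p t i"
        unfolding c_def A by (rule mult_left_mono[OF qf_phi[OF i(2)] cnn])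
      show ?thesis
      proof (cases "P i \<omega> > la ?p i")
        case True then show ?thesis using X A by simp
      next
        case False then show ?thesis using A by simp
      qed
    qed
  qed
  finally show "(\<integral>\<^sup>+\<omega>. ennreal (al (qf (\<lambda>j. P j \<omega>) i) i * phi E (al (qf (\<lambda>j. P j \<omega>) i)) (qf (\<lambda>j. P j \<omega>) i) t i) \<partial>M)
      \<le> (\<integral>\<^sup>+\<omega>. ennreal (if P i \<omega> > la (\<lambda>j. P j \<omega>) i then al (\<lambda>j. P j \<omega>) i / (1 - la (\<lambda>j. P j \<omega>) i) * phi E (al (\<lambda>j. P j \<omega>)) (\<lambda>j. P j \<omega>) t i else 0) \<partial>M)" .
next
  have cnn: "0 \<le> al p i / (1 - la p i)" for p i using al_nonneg[of p i] la1[of p i] by simp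
  fix \<omega> assume \<omega>: "\<omega> \<in> space M"
  let ?p = "\<lambda>j. P j \<omega>"
  let ?D = "real (max (card (rej_set E ?p (al ?p) t)) 1)"
  have "(\<Sum>i\<in>{1..t}. if ?p i > la ?p i then al ?p i / (1 - la ?p i) * phi E (al ?p) ?p t i else 0)
    \<le> (\<Sum>i\<in>{1..t}. al ?p i / (1 - la ?p i) * ((if P i \<omega> > la ?p i \<and> E i < t then 1 else 0) + (if E i \<ge> t then 1 else 0)) / ?D)"
  proof (rule sum_mono)
    fix i assume "i \<in> {1..t}"
    have "(if ?p i > la ?p i then al ?p i / (1 - la ?p i) * phi E (al ?p) ?p t i else 0)
      = al ?p i / (1 - la ?p i) * ((if ?p i > la ?p i \<and> E i \<le> t then 1 else 0) / ?D)"
      by (simp add: phi_def)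
    also have "\<dots> \<le> al ?p i / (1 - la ?p i) * (((if P i \<omega> > la ?p i \<and> E i < t then 1 else 0) + (if E i \<ge> t then 1 else 0)) / ?D)"
      by (intro mult_left_mono cnn divide_right_mono) auto
    finally show "(if ?p i > la ?p i then al ?p i / (1 - la ?p i) * phi E (al ?p) ?p t i else 0)
      \<le> al ?p i / (1 - la ?p i) * ((if P i \<omega> > la ?p i \<and> E i < t then 1 else 0) + (if E i \<ge> t then 1 else 0)) / ?D"
      by simp
  qed
  also have "\<dots> = (\<Sum>i\<in>{1..t}. al ?p i / (1 - la ?p i) * ((if P i \<omega> > la ?p i \<and> E i < t then 1 else 0) + (if E i \<ge> t then 1 else 0))) / ?D"
    by (simp add: sum_divide_distrib)
  also have "\<dots> \<le> \<alpha>" using ratio_le[OF hyp[OF \<omega>] a0] .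
  finally show "(\<Sum>i\<in>{1..t}. if ?p i > la ?p i then al ?p i / (1 - la ?p i) * phi E (al ?p) ?p t i else 0) \<le> \<alpha>" .
qed

end

theorem theorem3:
  fixes M :: "'w measure" and P :: "nat \<Rightarrow> 'w \<Rightarrow> real" and H0 :: "nat set"
    and E :: "nat \<Rightarrow> nat" and \<alpha> :: real
  assumes "prob_space M"
    and meas: "\<And>i. P i \<in> borel_measurable M"
    and superunif: "\<And>i u. i \<in> H0 \<Longrightarrow> 0 \<le> u \<Longrightarrow> u \<le> 1 \<Longrightarrow>
                       measure M {\<omega> \<in> space M. P i \<omega> \<le> u} \<le> u"
    and indep: "null_indep M H0 P"
    and dec_time: "\<And>t. t \<le> E t"
  shows
   "(\<forall>f. (\<forall>t\<ge>1. \<forall>R. adm_hist t R \<longrightarrow> 0 \<le> f t R) \<and> mono_rule1 f \<and>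
         (\<forall>\<omega>\<in>space M. \<forall>t.
            (\<Sum>j\<in>{1..t}. lord_alpha f E (\<lambda>i. P i \<omega>) j)
              \<le> \<alpha> * real (max (rej_before E (\<lambda>i. P i \<omega>) (lord_alpha f E (\<lambda>i. P i \<omega>)) t) 1))
      \<longrightarrow> (\<forall>t. FDR M H0 E P (lord_alpha f E) t \<le> \<alpha>))
  \<and> (\<forall>g h. (\<forall>t\<ge>1. \<forall>R C. adm_hist t R \<and> adm_hist t C \<longrightarrow>
                0 \<le> g t R C \<and> g t R C \<le> h t R C \<and> h t R C < 1) \<and>
         mono_rule2 g \<and> mono_rule2 h \<and>
         (\<forall>\<omega>\<in>space M. \<forall>t.
            (\<Sum>j\<in>{1..t}. saff_alpha g h E (\<lambda>i. P i \<omega>) j / (1 - saff_lambda g h E (\<lambda>i. P i \<omega>) j)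
               * ((if P j \<omega> > saff_lambda g h E (\<lambda>i. P i \<omega>) j \<and> E j < t then 1 else 0)
                  + (if E j \<ge> t then 1 else 0)))
              \<le> \<alpha> * real (max (rej_before E (\<lambda>i. P i \<omega>) (saff_alpha g h E (\<lambda>i. P i \<omega>)) t) 1))
      \<longrightarrow> (\<forall>t. FDR M H0 E P (saff_alpha g h E) t \<le> \<alpha>))"
  proof (intro conjI allI impI)
  interpret P: prob_space M by fact
  obtain \<omega>0 where \<omega>0: "\<omega>0 \<in> space M" using P.not_empty by blast
  {
    fix f :: "nat \<Rightarrow> (nat \<Rightarrow> nat set) \<Rightarrow> real" and t
    assume H: "(\<forall>t\<ge>1. \<forall>R. adm_hist t R \<longrightarrow> 0 \<le> f t R) \<and> mono_rule1 f \<and>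
         (\<forall>\<omega>\<in>space M. \<forall>t.
            (\<Sum>j\<in>{1..t}. lord_alpha f E (\<lambda>i. P i \<omega>) j)
              \<le> \<alpha> * real (max (rej_before E (\<lambda>i. P i \<omega>) (lord_alpha f E (\<lambda>i. P i \<omega>)) t) 1))"
    define g' where "g' = (\<lambda>t (R :: nat \<Rightarrow> nat set) (C :: nat \<Rightarrow> nat set). f t R)"
    have eq: "lord_alpha f E = saff_alpha g' g' E" unfolding g'_def by (rule lord_alpha_saff)
    have AX: "prob_proc_axioms M P H0"
      by (rule prob_proc_axioms.intro) (fact | rule meas superunif indep | assumption)+
    have PR: "proc g' g' E"
    proof unfold_locales
      show "\<And>t R C. 1 \<le> t \<Longrightarrow> adm_hist t R \<Longrightarrow> adm_hist t C \<Longrightarrow> 0 \<le> g' t R C \<and> g' t R C \<le> g' t R C"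
        using H by (simp add: g'_def)
      show "mono_rule2 g'" using H unfolding mono_rule2_def mono_rule1_def g'_def by blast
      show "\<And>t. t \<le> E t" by (rule dec_time)
    qed
    interpret Q: prob_proc g' g' E M P H0 by (rule prob_proc.intro[OF PR AX])
    have H3: "\<And>\<omega> t. \<omega> \<in> space M \<Longrightarrow> (\<Sum>j\<in>{1..t}. lord_alpha f E (\<lambda>i. P i \<omega>) j)
              \<le> \<alpha> * real (max (rej_before E (\<lambda>i. P i \<omega>) (lord_alpha f E (\<lambda>i. P i \<omega>)) t) 1)"
      using H by blast
    have a0: "0 \<le> \<alpha>" using H3[OF \<omega>0, of 0] by (simp add: rej_before_def)
    show "FDR M H0 E P (lord_alpha f E) t \<le> \<alpha>" unfolding eq
      by (rule Q.lord_final[OF _ a0]) (rule H3[unfolded eq])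
  }
  {
    fix g h :: "nat \<Rightarrow> (nat \<Rightarrow> nat set) \<Rightarrow> (nat \<Rightarrow> nat set) \<Rightarrow> real" and t
    assume H: "(\<forall>t\<ge>1. \<forall>R C. adm_hist t R \<and> adm_hist t C \<longrightarrow>
                0 \<le> g t R C \<and> g t R C \<le> h t R C \<and> h t R C < 1) \<and>
         mono_rule2 g \<and> mono_rule2 h \<and>
         (\<forall>\<omega>\<in>space M. \<forall>t.
            (\<Sum>j\<in>{1..t}. saff_alpha g h E (\<lambda>i. P i \<omega>) j / (1 - saff_lambda g h E (\<lambda>i. P i \<omega>) j)
               * ((if P j \<omega> > saff_lambda g h E (\<lambda>i. P i \<omega>) j \<and> E j < t then 1 else 0)
                  + (if E j \<ge> t then 1 else 0)))
              \<le> \<alpha> * real (max (rej_before E (\<lambda>i. P i \<omega>) (saff_alpha g h E (\<lambda>i. P i \<omega>)) t) 1))"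
    have AX: "prob_proc_axioms M P H0"
      by (rule prob_proc_axioms.intro) (fact | rule meas superunif indep | assumption)+
    have PR: "proc g h E"
    proof unfold_locales
      show "\<And>t R C. 1 \<le> t \<Longrightarrow> adm_hist t R \<Longrightarrow> adm_hist t C \<Longrightarrow> 0 \<le> g t R C \<and> g t R C \<le> h t R C"
        using H by blast
      show "mono_rule2 g" "mono_rule2 h" using H by blast+
      show "\<And>t. t \<le> E t" by (rule dec_time)
    qed
    interpret Q: prob_proc g h E M P H0 by (rule prob_proc.intro[OF PR AX])
    have la1: "saff_lambda g h E p j < 1" for p j
    proof (cases "j = 0")
      case True then show ?thesis by (simp add: D0)
    next
      case False
      then have "1 \<le> j" by simp
      then show ?thesis using H D2(2)[OF \<open>1 \<le> j\<close>, of g h E p] adm_hist by metis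
    qed
    have H3: "\<And>\<omega> t. \<omega> \<in> space M \<Longrightarrow> (\<Sum>j\<in>{1..t}. saff_alpha g h E (\<lambda>i. P i \<omega>) j / (1 - saff_lambda g h E (\<lambda>i. P i \<omega>) j)
               * ((if P j \<omega> > saff_lambda g h E (\<lambda>i. P i \<omega>) j \<and> E j < t then 1 else 0)
                  + (if E j \<ge> t then 1 else 0)))
              \<le> \<alpha> * real (max (rej_before E (\<lambda>i. P i \<omega>) (saff_alpha g h E (\<lambda>i. P i \<omega>)) t) 1)"
      using H by blast
    have a0: "0 \<le> \<alpha>" using H3[OF \<omega>0, of 0] by (simp add: rej_before_def)
    show "FDR M H0 E P (saff_alpha g h E) t \<le> \<alpha>"
      by (rule Q.saff_final[OF la1 _ a0]) (rule H3)
  }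
qed

end
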